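(* Let $G$ be a finite group, $k\ge 1$ an integer, and $A_1,\ldots,A_k\subseteq G$ nonempty subsets such that the multiplication map $A_1\times\cdots\times A_k\to G$, $(a_1,\ldots,a_k)\mapsto a_1\cdots a_k$, is a bijection. For a subset $A\subseteq G$ write $A^{-1}A=\{g^{-1}h: g,h\in A\}$ and $AA^{-1}=\{gh^{-1}: g,h\in A\}$. Then: (i) $\mathrm{card}(A_1)$ divides the order of the subgroup of $G$ generated by $A_1^{-1}A_1$; this subgroup equals the subgroup generated by $g^{-1}A_1$ for any $g\in A_1$. Moreover, the order of this subgroup equals the order of the subgroup generated by $A_1A_1^{-1}$, which equals the subgroup generated by $A_1g^{-1}$ for any $g\in A_1$. (ii) $\mathrm{card}(A_k)$ divides the order of the subgroup of $G$ generated by $A_kA_k^{-1}$; this subgroup equals the subgroup generated by $A_kg^{-1}$ for any $g\in A_k$. Moreover, the order of this subgroup equals the order of the subgroup generated by $A_k^{-1}A_k$, which equals the subgroup generated by $g^{-1}A_k$ for any $g\in A_k$. (iii) For each $i$ with $1<i<k$, $\mathrm{card}(A_i)$ divides the order of the normal subgroup of $G$ generated by $A_i^{-1}A_i$; this normal subgroup equals the normal subgroup generated by $g^{-1}A_i$ for any $g\in A_i$, and also equals the normal subgroup generated by $A_iA_i^{-1}$, and the normal subgroup generated by $A_ig^{-1}$ for any $g\in A_i$. *)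

theory Defs
  imports "HOL-Algebra.Algebra"
begin

fun prod_seq :: "('a, 'b) monoid_scheme \<Rightarrow> (nat \<Rightarrow> 'a) \<Rightarrow> nat \<Rightarrow> 'a" where
  "prod_seq G a 0 = \<one>\<^bsub>G\<^esub>"
| "prod_seq G a (Suc n) = prod_seq G a n \<otimes>\<^bsub>G\<^esub> a (Suc n)"

definition normal_closure :: "('a, 'b) monoid_scheme \<Rightarrow> 'a set \<Rightarrow> 'a set" where
  "normal_closure G S = \<Inter> {N. N \<lhd> G \<and> S \<subseteq> N}"

end

theory Submission
  imports Defs
begin

lemma card_update:
  assumes S: "S \<subseteq> PiE I A" and i: "i \<in> I" and g0: "g0 \<in> A i"
    and cl: "\<And>a c. a \<in> S \<Longrightarrow> c \<in> A i \<Longrightarrow> a(i:=c) \<in> S"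
  shows "card S = card (A i) * card {a\<in>S. a i = g0}"
proof -
  have "bij_betw (\<lambda>(c,a). a(i:=c)) (A i \<times> {a\<in>S. a i = g0}) S"
  proof (rule bij_betw_imageI)
    show "inj_on (\<lambda>(c,a). a(i:=c)) (A i \<times> {a\<in>S. a i = g0})"
    proof (rule inj_onI)
      fix x y assume x: "x \<in> A i \<times> {a\<in>S. a i = g0}" and y: "y \<in> A i \<times> {a\<in>S. a i = g0}"
        and eq: "(\<lambda>(c,a). a(i:=c)) x = (\<lambda>(c,a). a(i:=c)) y"
      obtain c a where xe: "x = (c,a)" by (cases x)
      obtain c' a' where ye: "y = (c',a')" by (cases y)
      have h: "a(i:=c) = a'(i:=c')" "a i = g0" "a' i = g0" using x y eq xe ye by auto
      then have "c = c'" by (metis fun_upd_same)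
      moreover have "a = a'"
      proof
        fix j show "a j = a' j" using h fun_upd_other[of j i a c] fun_upd_other[of j i a' c']
          by (cases "j = i") (auto dest: fun_cong[of _ _ j])
      qed
      ultimately show "x = y" using xe ye by simp
    qed
    show "(\<lambda>(c,a). a(i:=c)) ` (A i \<times> {a\<in>S. a i = g0}) = S"
    proof
      show "(\<lambda>(c,a). a(i:=c)) ` (A i \<times> {a\<in>S. a i = g0}) \<subseteq> S" using cl by auto
      show "S \<subseteq> (\<lambda>(c,a). a(i:=c)) ` (A i \<times> {a\<in>S. a i = g0})"
      proof
        fix a assume a: "a \<in> S"
        then have "a i \<in> A i" using S i by (auto simp: PiE_def Pi_def)
        moreover have "a(i:=g0) \<in> S" using cl a g0 by blast
        moreover have "a = (a(i:=g0))(i:= a i)" by simp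
        ultimately show "a \<in> (\<lambda>(c,a). a(i:=c)) ` (A i \<times> {a\<in>S. a i = g0})"
          by (intro image_eqI[of _ _ "(a i, a(i:=g0))"]) auto
      qed
    qed
  qed
  then have "card S = card (A i \<times> {a\<in>S. a i = g0})" by (simp add: bij_betw_same_card)
  then show ?thesis by (simp add: card_cartesian_product)
qed

context group begin

lemma prod_seq_closed: "(\<And>j. j \<in> {1..n} \<Longrightarrow> a j \<in> carrier G) \<Longrightarrow> prod_seq G a n \<in> carrier G"
  by (induct n) auto

lemma prod_seq_cong: "(\<And>j. j \<in> {1..n} \<Longrightarrow> a j = b j) \<Longrightarrow> prod_seq G a n = prod_seq G b n"
  by (induct n) auto

lemma prod_seq_split:
  "(\<And>j. j \<in> {1..m+n} \<Longrightarrow> a j \<in> carrier G) \<Longrightarrow>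
   prod_seq G a (m+n) = prod_seq G a m \<otimes> prod_seq G (\<lambda>j. a (j+m)) n"
proof (induct n)
  case 0
  have "prod_seq G a m \<in> carrier G" by (rule prod_seq_closed) (use 0 in auto)
  then show ?case by simp
next
  case (Suc n)
  have c1: "prod_seq G a m \<in> carrier G" by (rule prod_seq_closed) (use Suc.prems in auto)
  have c2: "prod_seq G (\<lambda>j. a (j+m)) n \<in> carrier G" by (rule prod_seq_closed) (use Suc.prems in auto)
  have c3: "a (Suc (n+m)) \<in> carrier G" using Suc.prems by auto
  have "prod_seq G a (m + Suc n) = prod_seq G a (m+n) \<otimes> a (Suc (n+m))" by (simp add: add.commute)
  also have "\<dots> = prod_seq G a m \<otimes> prod_seq G (\<lambda>j. a (j+m)) n \<otimes> a (Suc (n+m))"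
    using Suc by simp
  also have "\<dots> = prod_seq G a m \<otimes> prod_seq G (\<lambda>j. a (j+m)) (Suc n)"
    using c1 c2 c3 by (simp add: m_assoc)
  finally show ?case .
qed

lemma decomp:
  assumes Asub: "\<And>i. i \<in> {1..k} \<Longrightarrow> A i \<subseteq> carrier G"
    and a: "a \<in> PiE {1..k} A" and i: "i \<in> {1..k}" and c: "c \<in> A i"
  shows "\<exists>P Q. P \<in> carrier G \<and> Q \<in> carrier G \<and> prod_seq G a k = P \<otimes> a i \<otimes> Q
     \<and> prod_seq G (a(i:=c)) k = P \<otimes> c \<otimes> Q \<and> (i = 1 \<longrightarrow> P = \<one>) \<and> (i = k \<longrightarrow> Q = \<one>)"
proof -
  have ac: "\<And>j. j \<in> {1..k} \<Longrightarrow> a j \<in> carrier G" using a Asub by (auto simp: PiE_def Pi_def)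
  have cc: "c \<in> carrier G" using c Asub i by auto
  have ac': "\<And>j. j \<in> {1..k} \<Longrightarrow> (a(i:=c)) j \<in> carrier G" using ac cc by auto
  have kk: "k = (i - 1) + (1 + (k - i))" using i by auto
  define P where "P = prod_seq G a (i - 1)"
  define Q where "Q = prod_seq G (\<lambda>j. a (j + 1 + (i - 1))) (k - i)"
  have gen: "prod_seq G b k = prod_seq G b (i - 1) \<otimes> b i \<otimes> prod_seq G (\<lambda>j. b (j + 1 + (i - 1))) (k - i)"
    if bc: "\<And>j. j \<in> {1..k} \<Longrightarrow> b j \<in> carrier G" for b
  proof -
    define b' where "b' = (\<lambda>j. b (j + (i - 1)))"
    have b'c: "b' j \<in> carrier G" if "j \<in> {1..1 + (k - i)}" for j unfolding b'_def by (rule bc) (use that i in auto)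
    have "prod_seq G b k = prod_seq G b (i - 1 + (1 + (k - i)))" using kk by simp
    also have "\<dots> = prod_seq G b (i - 1) \<otimes> prod_seq G b' (1 + (k - i))"
      unfolding b'_def by (rule prod_seq_split) (use bc kk in auto)
    also have "prod_seq G b' (1 + (k - i)) = prod_seq G b' 1 \<otimes> prod_seq G (\<lambda>j. b' (j + 1)) (k - i)"
      by (rule prod_seq_split) (use b'c in auto)
    also have "prod_seq G b' 1 = b i" using bc i unfolding b'_def by auto
    also have "(\<lambda>j. b' (j + 1)) = (\<lambda>j. b (j + 1 + (i - 1)))" unfolding b'_def by simp
    finally have eq: "prod_seq G b k = prod_seq G b (i - 1) \<otimes> (b i \<otimes> prod_seq G (\<lambda>j. b (j + 1 + (i - 1))) (k - i))" .
    have "prod_seq G b (i - 1) \<in> carrier G" by (rule prod_seq_closed) (use bc i in auto)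
    moreover have "prod_seq G (\<lambda>j. b (j + 1 + (i - 1))) (k - i) \<in> carrier G" by (rule prod_seq_closed) (use bc i in auto)
    moreover have "b i \<in> carrier G" using bc i by auto
    ultimately show ?thesis using eq by (simp add: m_assoc)
  qed
  have e1: "prod_seq G a k = P \<otimes> a i \<otimes> Q" unfolding P_def Q_def by (rule gen[OF ac])
  have "prod_seq G (a(i:=c)) k = prod_seq G (a(i:=c)) (i - 1) \<otimes> (a(i:=c)) i \<otimes> prod_seq G (\<lambda>j. (a(i:=c)) (j + 1 + (i - 1))) (k - i)"
    by (rule gen) (rule ac')
  also have "(a(i:=c)) i = c" by simp
  also have "prod_seq G (a(i:=c)) (i - 1) = P" unfolding P_def by (rule prod_seq_cong) auto
  also have "prod_seq G (\<lambda>j. (a(i:=c)) (j + 1 + (i - 1))) (k - i) = Q" unfolding Q_def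
    by (rule prod_seq_cong) auto
  finally have e2: "prod_seq G (a(i:=c)) k = P \<otimes> c \<otimes> Q" .
  have Pc: "P \<in> carrier G" unfolding P_def by (rule prod_seq_closed) (use ac i in auto)
  have Qc: "Q \<in> carrier G" unfolding Q_def by (rule prod_seq_closed) (use ac i in auto)
  have "i = 1 \<longrightarrow> P = \<one>" unfolding P_def by simp
  moreover have "i = k \<longrightarrow> Q = \<one>" unfolding Q_def by simp
  ultimately show ?thesis using e1 e2 Pc Qc by blast
qed

lemma cancel1 [simp]: "x \<in> carrier G \<Longrightarrow> y \<in> carrier G \<Longrightarrow> x \<otimes> (inv x \<otimes> y) = y"
  by (simp add: m_assoc[symmetric])
lemma cancel2 [simp]: "x \<in> carrier G \<Longrightarrow> y \<in> carrier G \<Longrightarrow> inv x \<otimes> (x \<otimes> y) = y"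
  by (simp add: m_assoc[symmetric])

lemma count_dvd:
  assumes Asub: "\<And>i. i \<in> {1..k} \<Longrightarrow> A i \<subseteq> carrier G"
    and bij: "bij_betw (\<lambda>a. prod_seq G a k) (PiE {1..k} A) (carrier G)"
    and i: "i \<in> {1..k}" and ne: "A i \<noteq> {}" and T: "T \<subseteq> carrier G"
    and cl: "\<And>a c. a \<in> PiE {1..k} A \<Longrightarrow> c \<in> A i \<Longrightarrow> prod_seq G a k \<in> T \<Longrightarrow> prod_seq G (a(i:=c)) k \<in> T"
  shows "card (A i) dvd card T"
proof -
  define S where "S = {a \<in> PiE {1..k} A. prod_seq G a k \<in> T}"
  have inj: "inj_on (\<lambda>a. prod_seq G a k) S" using bij unfolding S_def bij_betw_def
    by (auto intro: inj_on_subset)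
  have im: "(\<lambda>a. prod_seq G a k) ` S = T"
  proof
    show "(\<lambda>a. prod_seq G a k) ` S \<subseteq> T" unfolding S_def by auto
    show "T \<subseteq> (\<lambda>a. prod_seq G a k) ` S"
    proof
      fix x assume x: "x \<in> T"
      then have "x \<in> (\<lambda>a. prod_seq G a k) ` (PiE {1..k} A)" using T bij unfolding bij_betw_def by auto
      then obtain a where "a \<in> PiE {1..k} A" "x = prod_seq G a k" by auto
      then show "x \<in> (\<lambda>a. prod_seq G a k) ` S" unfolding S_def using x by auto
    qed
  qed
  have cT: "card T = card S" using card_image[OF inj] im by simp
  obtain g0 where g0: "g0 \<in> A i" using ne by auto
  have upd: "a(i:=c) \<in> PiE {1..k} A" if "a \<in> PiE {1..k} A" "c \<in> A i" for a c
    using that i by (auto simp: PiE_def Pi_def extensional_def)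
  have "card S = card (A i) * card {a\<in>S. a i = g0}"
    by (rule card_update[of S "{1..k}" A i g0]) (use i g0 upd cl in \<open>unfold S_def, blast+\<close>)
  then show ?thesis using cT by simp
qed

lemma gen_eq:
  assumes "S1 \<subseteq> carrier G" "S2 \<subseteq> carrier G" "\<And>H. subgroup H G \<Longrightarrow> S1 \<subseteq> H \<longleftrightarrow> S2 \<subseteq> H"
  shows "generate G S1 = generate G S2"
  using assms generate_minimal[OF assms(1)] generate_minimal[OF assms(2)] by auto

lemma nc_eq:
  assumes "\<And>N. N \<lhd> G \<Longrightarrow> S1 \<subseteq> N \<longleftrightarrow> S2 \<subseteq> N"
  shows "normal_closure G S1 = normal_closure G S2"
  unfolding normal_closure_def using assms by metis

lemma nc_normal:
  assumes "S \<subseteq> carrier G"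
  shows "normal_closure G S \<lhd> G" "S \<subseteq> normal_closure G S"
proof -
  have ne: "carrier G \<in> {N. N \<lhd> G \<and> S \<subseteq> N}" using assms normal_self by auto
  have sg: "subgroup (normal_closure G S) G" unfolding normal_closure_def
    by (rule subgroups_Inter) (use ne normal_imp_subgroup in auto)
  show "normal_closure G S \<lhd> G" unfolding normal_inv_iff
  proof (intro conjI sg ballI)
    fix x h assume x: "x \<in> carrier G" and h: "h \<in> normal_closure G S"
    show "x \<otimes> h \<otimes> inv x \<in> normal_closure G S" unfolding normal_closure_def
    proof
      fix N assume N: "N \<in> {N. N \<lhd> G \<and> S \<subseteq> N}"
      then have "h \<in> N" using h unfolding normal_closure_def by auto
      then show "x \<otimes> h \<otimes> inv x \<in> N" using N x normal_inv_iff by auto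
    qed
  qed
  show "S \<subseteq> normal_closure G S" unfolding normal_closure_def by auto
qed

lemma lc_mem: "x \<in> (g <# A) \<longleftrightarrow> (\<exists>a\<in>A. x = g \<otimes> a)"
  by (auto simp: l_coset_def)
lemma rc_mem: "x \<in> (A #> g) \<longleftrightarrow> (\<exists>a\<in>A. x = a \<otimes> g)"
  by (auto simp: r_coset_def)
lemma sm_mem1: "x \<in> (set_inv A <#> A) \<longleftrightarrow> (\<exists>a\<in>A. \<exists>b\<in>A. x = inv a \<otimes> b)"
  by (auto simp: set_mult_def SET_INV_def)
lemma sm_mem2: "x \<in> (A <#> set_inv A) \<longleftrightarrow> (\<exists>a\<in>A. \<exists>b\<in>A. x = a \<otimes> inv b)"
  by (auto simp: set_mult_def SET_INV_def)

lemma sub1: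
  assumes H: "subgroup H G" and A: "A \<subseteq> carrier G" and g: "g \<in> A"
  shows "(set_inv A <#> A \<subseteq> H) = (inv g <# A \<subseteq> H)"
proof
  assume "set_inv A <#> A \<subseteq> H" then show "inv g <# A \<subseteq> H"
    unfolding subset_iff lc_mem sm_mem1 using g by blast
next
  assume h: "inv g <# A \<subseteq> H"
  show "set_inv A <#> A \<subseteq> H"
  proof
    fix x assume "x \<in> set_inv A <#> A"
    then obtain a b where ab: "a \<in> A" "b \<in> A" "x = inv a \<otimes> b" by (auto simp: sm_mem1)
    have 1: "inv g \<otimes> a \<in> H" "inv g \<otimes> b \<in> H" using h ab unfolding subset_iff lc_mem by blast+
    have gc: "g \<in> carrier G" "a \<in> carrier G" "b \<in> carrier G" using A g ab by auto
    have "inv (inv g \<otimes> a) \<otimes> (inv g \<otimes> b) \<in> H" using 1 H by (simp add: subgroup.m_closed subgroup.m_inv_closed)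
    moreover have "inv (inv g \<otimes> a) \<otimes> (inv g \<otimes> b) = x" using gc ab by (simp add: inv_mult_group m_assoc)
    ultimately show "x \<in> H" by simp
  qed
qed

lemma sub2:
  assumes H: "subgroup H G" and A: "A \<subseteq> carrier G" and g: "g \<in> A"
  shows "(A <#> set_inv A \<subseteq> H) = (A #> inv g \<subseteq> H)"
proof
  assume "A <#> set_inv A \<subseteq> H" then show "A #> inv g \<subseteq> H"
    unfolding subset_iff rc_mem sm_mem2 using g by blast
next
  assume h: "A #> inv g \<subseteq> H"
  show "A <#> set_inv A \<subseteq> H"
  proof
    fix x assume "x \<in> A <#> set_inv A"
    then obtain a b where ab: "a \<in> A" "b \<in> A" "x = a \<otimes> inv b" by (auto simp: sm_mem2)
    have 1: "a \<otimes> inv g \<in> H" "b \<otimes> inv g \<in> H" using h ab unfolding subset_iff rc_mem by blast+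
    have gc: "g \<in> carrier G" "a \<in> carrier G" "b \<in> carrier G" using A g ab by auto
    have "(a \<otimes> inv g) \<otimes> inv (b \<otimes> inv g) \<in> H" using 1 H by (simp add: subgroup.m_closed subgroup.m_inv_closed)
    moreover have "(a \<otimes> inv g) \<otimes> inv (b \<otimes> inv g) = x" using gc ab by (simp add: inv_mult_group m_assoc)
    ultimately show "x \<in> H" by simp
  qed
qed

lemma sub3:
  assumes N: "N \<lhd> G" and A: "A \<subseteq> carrier G" and g: "g \<in> A"
  shows "(inv g <# A \<subseteq> N) = (A #> inv g \<subseteq> N)"
proof -
  have gc: "g \<in> carrier G" using A g by auto
  have conj: "x \<otimes> h \<otimes> inv x \<in> N" if "x \<in> carrier G" "h \<in> N" for x h
    using N that normal_inv_iff by auto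
  show ?thesis
  proof
    assume h: "inv g <# A \<subseteq> N"
    show "A #> inv g \<subseteq> N"
    proof
      fix x assume "x \<in> A #> inv g"
      then obtain a where a: "a \<in> A" "x = a \<otimes> inv g" by (auto simp: rc_mem)
      have "inv g \<otimes> a \<in> N" using h a unfolding subset_iff lc_mem by blast
      then have "g \<otimes> (inv g \<otimes> a) \<otimes> inv g \<in> N" using conj gc by auto
      then show "x \<in> N" using a A gc by (simp add: m_assoc subsetD)
    qed
  next
    assume h: "A #> inv g \<subseteq> N"
    show "inv g <# A \<subseteq> N"
    proof
      fix x assume "x \<in> inv g <# A"
      then obtain a where a: "a \<in> A" "x = inv g \<otimes> a" by (auto simp: lc_mem)
      have "a \<otimes> inv g \<in> N" using h a unfolding subset_iff rc_mem by blast
      then have "inv g \<otimes> (a \<otimes> inv g) \<otimes> inv (inv g) \<in> N" using conj[of "inv g" "a \<otimes> inv g"] gc by blast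
      then show "x \<in> N" using a A gc by (simp add: m_assoc subsetD)
    qed
  qed
qed

lemma conj_gen:
  assumes S: "S \<subseteq> carrier G" and S': "S' \<subseteq> carrier G" and y: "y \<in> carrier G"
    and h: "\<And>s. s \<in> S \<Longrightarrow> y \<otimes> s \<otimes> inv y \<in> generate G S'"
    and x: "x \<in> generate G S"
  shows "y \<otimes> x \<otimes> inv y \<in> generate G S'"
  using x
proof (induct x rule: generate.induct)
  case one
  then show ?case using y by (simp add: generate.one)
next
  case (incl s)
  then show ?case using h by simp
next
  case (inv s)
  have sc: "s \<in> carrier G" using inv S by auto
  have "inv (y \<otimes> s \<otimes> inv y) \<in> generate G S'" using generate_m_inv_closed[OF S' h[OF inv]] .
  moreover have "inv (y \<otimes> s \<otimes> inv y) = y \<otimes> inv s \<otimes> inv y" using sc y by (simp add: inv_mult_group m_assoc)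
  ultimately show ?case by simp
next
  case (eng h1 h2)
  have c: "h1 \<in> carrier G" "h2 \<in> carrier G" using eng generate_in_carrier[OF S] by auto
  have "(y \<otimes> h1 \<otimes> inv y) \<otimes> (y \<otimes> h2 \<otimes> inv y) \<in> generate G S'" using eng by (simp add: generate.eng)
  moreover have "(y \<otimes> h1 \<otimes> inv y) \<otimes> (y \<otimes> h2 \<otimes> inv y) = y \<otimes> (h1 \<otimes> h2) \<otimes> inv y" using c y by (simp add: m_assoc)
  ultimately show ?case by simp
qed

lemma card_gen_eq:
  assumes fin: "finite (carrier G)" and A: "A \<subseteq> carrier G" and g: "g \<in> A"
  shows "card (generate G (inv g <# A)) = card (generate G (A #> inv g))"
proof -
  have gc: "g \<in> carrier G" using A g by auto
  have S1: "inv g <# A \<subseteq> carrier G" using A gc by (auto simp: lc_mem subset_iff)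
  have S2: "A #> inv g \<subseteq> carrier G" using A gc by (auto simp: rc_mem subset_iff)
  have f1: "finite (generate G (A #> inv g))" "finite (generate G (inv g <# A))"
    using fin generate_incl[OF S1] generate_incl[OF S2] finite_subset by auto
  have c1: "g \<otimes> x \<otimes> inv g \<in> generate G (A #> inv g)" if "x \<in> generate G (inv g <# A)" for x
  proof (rule conj_gen[OF S1 S2 gc _ that])
    fix s assume "s \<in> inv g <# A"
    then obtain a where a: "a \<in> A" "s = inv g \<otimes> a" by (auto simp: lc_mem)
    have "a \<otimes> inv g \<in> generate G (A #> inv g)" using a by (intro generate.incl) (unfold rc_mem, blast)
    then show "g \<otimes> s \<otimes> inv g \<in> generate G (A #> inv g)" using a A gc by (simp add: subsetD)
  qed
  have c2: "inv g \<otimes> x \<otimes> inv (inv g) \<in> generate G (inv g <# A)" if "x \<in> generate G (A #> inv g)" for x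
  proof (rule conj_gen[OF S2 S1 _ _ that])
    show "inv g \<in> carrier G" using gc by simp
    fix s assume "s \<in> A #> inv g"
    then obtain a where a: "a \<in> A" "s = a \<otimes> inv g" by (auto simp: rc_mem)
    have "inv g \<otimes> a \<in> generate G (inv g <# A)" using a by (intro generate.incl) (unfold lc_mem, blast)
    then show "inv g \<otimes> s \<otimes> inv (inv g) \<in> generate G (inv g <# A)" using a A gc by (simp add: subsetD m_assoc)
  qed
  have i1: "inj_on (\<lambda>x. g \<otimes> x \<otimes> inv g) (generate G (inv g <# A))"
    using generate_incl[OF S1] gc by (intro inj_onI) (auto simp: subsetD)
  have i2: "inj_on (\<lambda>x. inv g \<otimes> x \<otimes> inv (inv g)) (generate G (A #> inv g))"
    using generate_incl[OF S2] gc by (intro inj_onI) (auto simp: subsetD)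
  have "card (generate G (inv g <# A)) \<le> card (generate G (A #> inv g))"
    using card_inj_on_le[OF i1 _ f1(1)] c1 by auto
  moreover have "card (generate G (A #> inv g)) \<le> card (generate G (inv g <# A))"
    using card_inj_on_le[OF i2 _ f1(2)] c2 by auto
  ultimately show ?thesis by simp
qed

lemma sc1: "A \<subseteq> carrier G \<Longrightarrow> set_inv A <#> A \<subseteq> carrier G"
  by (auto simp: sm_mem1 subset_iff)
lemma sc2: "A \<subseteq> carrier G \<Longrightarrow> A <#> set_inv A \<subseteq> carrier G"
  by (auto simp: sm_mem2 subset_iff)
lemma sc3: "A \<subseteq> carrier G \<Longrightarrow> g \<in> carrier G \<Longrightarrow> g <# A \<subseteq> carrier G"
  by (auto simp: lc_mem subset_iff)
lemma sc4: "A \<subseteq> carrier G \<Longrightarrow> g \<in> carrier G \<Longrightarrow> A #> g \<subseteq> carrier G"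
  by (auto simp: rc_mem subset_iff)

lemma part_gen:
  assumes fin: "finite (carrier G)" and A: "B \<subseteq> carrier G" and ne: "B \<noteq> {}"
    and dv: "\<And>g. g \<in> B \<Longrightarrow> card B dvd card (generate G (inv g <# B))"
  shows "card B dvd card (generate G (set_inv B <#> B))
      \<and> (\<forall>g\<in>B. generate G (set_inv B <#> B) = generate G (inv g <# B))
      \<and> card (generate G (set_inv B <#> B)) = card (generate G (B <#> set_inv B))
      \<and> (\<forall>g\<in>B. generate G (B <#> set_inv B) = generate G (B #> inv g))"
proof -
  have e1: "generate G (set_inv B <#> B) = generate G (inv g <# B)" if g: "g \<in> B" for g
    using g A by (intro gen_eq sc1 sc3 sub1) auto
  have e2: "generate G (B <#> set_inv B) = generate G (B #> inv g)" if g: "g \<in> B" for g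
    using g A by (intro gen_eq sc2 sc4 sub2) auto
  obtain g where g: "g \<in> B" using ne by auto
  show ?thesis using e1 e2 dv[OF g] card_gen_eq[OF fin A g] g by auto
qed

lemma part_gen':
  assumes fin: "finite (carrier G)" and A: "B \<subseteq> carrier G" and ne: "B \<noteq> {}"
    and dv: "\<And>g. g \<in> B \<Longrightarrow> card B dvd card (generate G (B #> inv g))"
  shows "card B dvd card (generate G (B <#> set_inv B))
      \<and> (\<forall>g\<in>B. generate G (B <#> set_inv B) = generate G (B #> inv g))
      \<and> card (generate G (B <#> set_inv B)) = card (generate G (set_inv B <#> B))
      \<and> (\<forall>g\<in>B. generate G (set_inv B <#> B) = generate G (inv g <# B))"
proof -
  have e1: "generate G (set_inv B <#> B) = generate G (inv g <# B)" if g: "g \<in> B" for g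
    using g A by (intro gen_eq sc1 sc3 sub1) auto
  have e2: "generate G (B <#> set_inv B) = generate G (B #> inv g)" if g: "g \<in> B" for g
    using g A by (intro gen_eq sc2 sc4 sub2) auto
  obtain g where g: "g \<in> B" using ne by auto
  show ?thesis using e1 e2 dv[OF g] card_gen_eq[OF fin A g] g by auto
qed

lemma part_nc:
  assumes A: "B \<subseteq> carrier G" and ne: "B \<noteq> {}"
    and dv: "\<And>g. g \<in> B \<Longrightarrow> card B dvd card (normal_closure G (inv g <# B))"
  shows "card B dvd card (normal_closure G (set_inv B <#> B))
      \<and> (\<forall>g\<in>B. normal_closure G (set_inv B <#> B) = normal_closure G (inv g <# B))
      \<and> normal_closure G (set_inv B <#> B) = normal_closure G (B <#> set_inv B)
      \<and> (\<forall>g\<in>B. normal_closure G (set_inv B <#> B) = normal_closure G (B #> inv g))"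
proof -
  have e1: "normal_closure G (set_inv B <#> B) = normal_closure G (inv g <# B)" if g: "g \<in> B" for g
    using g A by (intro nc_eq sub1 normal_imp_subgroup) auto
  have e3: "normal_closure G (set_inv B <#> B) = normal_closure G (B #> inv g)" if g: "g \<in> B" for g
  proof (rule nc_eq)
    fix N assume N: "N \<lhd> G"
    show "(set_inv B <#> B \<subseteq> N) = (B #> inv g \<subseteq> N)"
      using sub1[OF normal_imp_subgroup[OF N] A g] sub3[OF N A g] by simp
  qed
  obtain g where g: "g \<in> B" using ne by auto
  have e2: "normal_closure G (set_inv B <#> B) = normal_closure G (B <#> set_inv B)"
  proof (rule nc_eq)
    fix N assume N: "N \<lhd> G"
    show "(set_inv B <#> B \<subseteq> N) = (B <#> set_inv B \<subseteq> N)"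
      using sub1[OF normal_imp_subgroup[OF N] A g] sub3[OF N A g] sub2[OF normal_imp_subgroup[OF N] A g] by simp
  qed
  have dvdC: "card B dvd card (normal_closure G (set_inv B <#> B))" using e1[OF g] dv[OF g] by simp
  show ?thesis using dvdC e1 e2 e3 by blast
qed

lemma dvd_left:
  assumes Asub: "\<And>i. i \<in> {1..k} \<Longrightarrow> A i \<subseteq> carrier G"
    and bij: "bij_betw (\<lambda>a. prod_seq G a k) (PiE {1..k} A) (carrier G)"
    and k: "k \<ge> 1" and g: "g \<in> A 1"
  shows "card (A 1) dvd card (generate G (inv g <# A 1))"
proof -
  have i: "(1::nat) \<in> {1..k}" using k by auto
  have A1: "A 1 \<subseteq> carrier G" using Asub i by auto
  have gc: "g \<in> carrier G" using A1 g by auto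
  define H where "H = generate G (inv g <# A 1)"
  have Hs: "subgroup H G" unfolding H_def by (rule generate_is_subgroup) (rule sc3[OF A1], simp add: gc)
  have inH: "inv g \<otimes> c \<in> H" if "c \<in> A 1" for c
    unfolding H_def by (rule generate.incl) (use that in \<open>unfold lc_mem, blast\<close>)
  define T where "T = {x \<in> carrier G. inv g \<otimes> x \<in> H}"
  have "card (A 1) dvd card T"
  proof (rule count_dvd[OF Asub bij i])
    show "A 1 \<noteq> {}" using g by auto
    show "T \<subseteq> carrier G" unfolding T_def by auto
    fix a c assume a: "a \<in> PiE {1..k} A" and c: "c \<in> A 1" and aT: "prod_seq G a k \<in> T"
    obtain P Q where PQ: "P \<in> carrier G" "Q \<in> carrier G" "prod_seq G a k = P \<otimes> a 1 \<otimes> Q"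
      "prod_seq G (a(1:=c)) k = P \<otimes> c \<otimes> Q" "P = \<one>"
      using decomp[OF Asub a i c] by auto
    have a1: "a 1 \<in> A 1" using a i by (auto simp: PiE_def Pi_def)
    have a1c: "a 1 \<in> carrier G" "c \<in> carrier G" using a1 c A1 by auto
    have "inv g \<otimes> (a 1 \<otimes> Q) \<in> H" using aT PQ a1c unfolding T_def by simp
    then have "inv (inv g \<otimes> a 1) \<otimes> (inv g \<otimes> (a 1 \<otimes> Q)) \<in> H"
      using inH[OF a1] Hs by (simp add: subgroup.m_closed subgroup.m_inv_closed)
    then have QH: "Q \<in> H" using a1c gc PQ by (simp add: inv_mult_group m_assoc)
    have "(inv g \<otimes> c) \<otimes> Q \<in> H" using inH[OF c] QH Hs by (simp add: subgroup.m_closed)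
    then show "prod_seq G (a(1:=c)) k \<in> T" unfolding T_def using PQ a1c gc by (simp add: m_assoc)
  qed
  moreover have "card T = card H"
  proof -
    have Hc: "H \<subseteq> carrier G" using Hs subgroup.subset by blast
    have "inj_on (\<lambda>h. g \<otimes> h) H" using Hc gc by (intro inj_onI) (auto simp: subset_iff)
    moreover have "(\<lambda>h. g \<otimes> h) ` H = T"
    proof
      show "(\<lambda>h. g \<otimes> h) ` H \<subseteq> T" unfolding T_def using Hc gc by (auto simp: subset_iff)
      show "T \<subseteq> (\<lambda>h. g \<otimes> h) ` H"
      proof
        fix x assume x: "x \<in> T"
        then have "x = g \<otimes> (inv g \<otimes> x)" "inv g \<otimes> x \<in> H" unfolding T_def using gc by auto
        then show "x \<in> (\<lambda>h. g \<otimes> h) ` H" by blast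
      qed
    qed
    ultimately show ?thesis using card_image by fastforce
  qed
  ultimately show ?thesis unfolding H_def by simp
qed

lemma dvd_right:
  assumes Asub: "\<And>i. i \<in> {1..k} \<Longrightarrow> A i \<subseteq> carrier G"
    and bij: "bij_betw (\<lambda>a. prod_seq G a k) (PiE {1..k} A) (carrier G)"
    and k: "k \<ge> 1" and g: "g \<in> A k"
  shows "card (A k) dvd card (generate G (A k #> inv g))"
proof -
  have i: "k \<in> {1..k}" using k by auto
  have A1: "A k \<subseteq> carrier G" using Asub i by auto
  have gc: "g \<in> carrier G" using A1 g by auto
  define H where "H = generate G (A k #> inv g)"
  have Hs: "subgroup H G" unfolding H_def by (rule generate_is_subgroup) (rule sc4[OF A1], simp add: gc)
  have inH: "c \<otimes> inv g \<in> H" if "c \<in> A k" for c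
    unfolding H_def by (rule generate.incl) (use that in \<open>unfold rc_mem, blast\<close>)
  define T where "T = {x \<in> carrier G. x \<otimes> inv g \<in> H}"
  have "card (A k) dvd card T"
  proof (rule count_dvd[OF Asub bij i])
    show "A k \<noteq> {}" using g by auto
    show "T \<subseteq> carrier G" unfolding T_def by auto
    fix a c assume a: "a \<in> PiE {1..k} A" and c: "c \<in> A k" and aT: "prod_seq G a k \<in> T"
    obtain P Q where PQ: "P \<in> carrier G" "Q \<in> carrier G" "prod_seq G a k = P \<otimes> a k \<otimes> Q"
      "prod_seq G (a(k:=c)) k = P \<otimes> c \<otimes> Q" "Q = \<one>"
      using decomp[OF Asub a i c] by auto
    have a1: "a k \<in> A k" using a i by (auto simp: PiE_def Pi_def)
    have a1c: "a k \<in> carrier G" "c \<in> carrier G" using a1 c A1 by auto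
    have "P \<otimes> (a k \<otimes> inv g) \<in> H" using aT PQ a1c gc unfolding T_def by (simp add: m_assoc)
    then have "(P \<otimes> (a k \<otimes> inv g)) \<otimes> inv (a k \<otimes> inv g) \<in> H"
      using inH[OF a1] Hs by (simp add: subgroup.m_closed subgroup.m_inv_closed)
    then have QH: "P \<in> H" using a1c gc PQ by (simp add: inv_mult_group m_assoc)
    have "P \<otimes> (c \<otimes> inv g) \<in> H" using inH[OF c] QH Hs by (simp add: subgroup.m_closed)
    then show "prod_seq G (a(k:=c)) k \<in> T" unfolding T_def using PQ a1c gc by (simp add: m_assoc)
  qed
  moreover have "card T = card H"
  proof -
    have Hc: "H \<subseteq> carrier G" using Hs subgroup.subset by blast
    have "inj_on (\<lambda>h. h \<otimes> g) H" using Hc gc by (intro inj_onI) (auto simp: subset_iff)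
    moreover have "(\<lambda>h. h \<otimes> g) ` H = T"
    proof
      show "(\<lambda>h. h \<otimes> g) ` H \<subseteq> T" unfolding T_def using Hc gc by (auto simp: subset_iff m_assoc)
      show "T \<subseteq> (\<lambda>h. h \<otimes> g) ` H"
      proof
        fix x assume x: "x \<in> T"
        then have "x = (x \<otimes> inv g) \<otimes> g" "x \<otimes> inv g \<in> H" unfolding T_def using gc by (auto simp: m_assoc)
        then show "x \<in> (\<lambda>h. h \<otimes> g) ` H" by blast
      qed
    qed
    ultimately show ?thesis using card_image by fastforce
  qed
  ultimately show ?thesis unfolding H_def by simp
qed

lemma dvd_mid:
  assumes Asub: "\<And>i. i \<in> {1..k} \<Longrightarrow> A i \<subseteq> carrier G"
    and bij: "bij_betw (\<lambda>a. prod_seq G a k) (PiE {1..k} A) (carrier G)"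
    and i: "i \<in> {1..k}" and g: "g \<in> A i"
  shows "card (A i) dvd card (normal_closure G (inv g <# A i))"
proof -
  have A1: "A i \<subseteq> carrier G" using Asub i by auto
  have gc: "g \<in> carrier G" using A1 g by auto
  define N where "N = normal_closure G (inv g <# A i)"
  have sc: "inv g <# A i \<subseteq> carrier G" by (rule sc3[OF A1]) (simp add: gc)
  have Nn: "N \<lhd> G" unfolding N_def by (rule nc_normal[OF sc])
  have Hs: "subgroup N G" using Nn normal_imp_subgroup by blast
  have inH: "inv g \<otimes> c \<in> N" if "c \<in> A i" for c
    using nc_normal(2)[OF sc] that unfolding N_def subset_iff lc_mem by blast
  have conj: "x \<otimes> h \<otimes> inv x \<in> N" if "x \<in> carrier G" "h \<in> N" for x h
    using Nn that normal_inv_iff by auto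
  show ?thesis unfolding N_def[symmetric]
  proof (rule count_dvd[OF Asub bij i])
    show "A i \<noteq> {}" using g by auto
    show "N \<subseteq> carrier G" using Hs subgroup.subset by blast
    fix a c assume a: "a \<in> PiE {1..k} A" and c: "c \<in> A i" and aT: "prod_seq G a k \<in> N"
    obtain P Q where PQ: "P \<in> carrier G" "Q \<in> carrier G" "prod_seq G a k = P \<otimes> a i \<otimes> Q"
      "prod_seq G (a(i:=c)) k = P \<otimes> c \<otimes> Q"
      using decomp[OF Asub a i c] by auto
    have a1: "a i \<in> A i" using a i by (auto simp: PiE_def Pi_def)
    have a1c: "a i \<in> carrier G" "c \<in> carrier G" using a1 c A1 by auto
    have "inv (inv g \<otimes> a i) \<otimes> (inv g \<otimes> c) \<in> N"
      using inH[OF a1] inH[OF c] Hs by (simp add: subgroup.m_closed subgroup.m_inv_closed)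
    then have n: "inv (a i) \<otimes> c \<in> N" using a1c gc by (simp add: inv_mult_group m_assoc)
    have "inv Q \<otimes> (inv (a i) \<otimes> c) \<otimes> inv (inv Q) \<in> N" using conj[OF _ n, of "inv Q"] PQ by blast
    then have "(P \<otimes> a i \<otimes> Q) \<otimes> (inv Q \<otimes> (inv (a i) \<otimes> c) \<otimes> inv (inv Q)) \<in> N"
      using aT PQ Hs by (simp add: subgroup.m_closed)
    then show "prod_seq G (a(i:=c)) k \<in> N" using PQ a1c by (simp add: m_assoc)
  qed
qed

end

theorem lemma2p1:
  fixes G (structure) and k :: nat and A :: "nat \<Rightarrow> 'a set"
  assumes "group G" and "finite (carrier G)" and "k \<ge> 1"
    and "\<And>i. i \<in> {1..k} \<Longrightarrow> A i \<subseteq> carrier G"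
    and "\<And>i. i \<in> {1..k} \<Longrightarrow> A i \<noteq> {}"
    and "bij_betw (\<lambda>a. prod_seq G a k) (PiE {1..k} A) (carrier G)"
  shows
    "(card (A 1) dvd card (generate G (set_inv (A 1) <#> A 1))
      \<and> (\<forall>g\<in>A 1. generate G (set_inv (A 1) <#> A 1) = generate G (inv g <# A 1))
      \<and> card (generate G (set_inv (A 1) <#> A 1)) = card (generate G (A 1 <#> set_inv (A 1)))
      \<and> (\<forall>g\<in>A 1. generate G (A 1 <#> set_inv (A 1)) = generate G (A 1 #> inv g)))
   \<and> (card (A k) dvd card (generate G (A k <#> set_inv (A k)))
      \<and> (\<forall>g\<in>A k. generate G (A k <#> set_inv (A k)) = generate G (A k #> inv g))
      \<and> card (generate G (A k <#> set_inv (A k))) = card (generate G (set_inv (A k) <#> A k))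
      \<and> (\<forall>g\<in>A k. generate G (set_inv (A k) <#> A k) = generate G (inv g <# A k)))
   \<and> (\<forall>i. 1 < i \<and> i < k \<longrightarrow>
        card (A i) dvd card (normal_closure G (set_inv (A i) <#> A i))
      \<and> (\<forall>g\<in>A i. normal_closure G (set_inv (A i) <#> A i) = normal_closure G (inv g <# A i))
      \<and> normal_closure G (set_inv (A i) <#> A i) = normal_closure G (A i <#> set_inv (A i))
      \<and> (\<forall>g\<in>A i. normal_closure G (set_inv (A i) <#> A i) = normal_closure G (A i #> inv g)))"
proof -
  interpret group G by fact
  have i1: "(1::nat) \<in> {1..k}" "k \<in> {1..k}" using assms(3) by auto
  have L: "card (A 1) dvd card (generate G (set_inv (A 1) <#> A 1))
      \<and> (\<forall>g\<in>A 1. generate G (set_inv (A 1) <#> A 1) = generate G (inv g <# A 1))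
      \<and> card (generate G (set_inv (A 1) <#> A 1)) = card (generate G (A 1 <#> set_inv (A 1)))
      \<and> (\<forall>g\<in>A 1. generate G (A 1 <#> set_inv (A 1)) = generate G (A 1 #> inv g))"
    by (rule part_gen[OF assms(2) assms(4)[OF i1(1)] assms(5)[OF i1(1)]])
       (rule dvd_left[OF assms(4) assms(6) assms(3)])
  have R: "card (A k) dvd card (generate G (A k <#> set_inv (A k)))
      \<and> (\<forall>g\<in>A k. generate G (A k <#> set_inv (A k)) = generate G (A k #> inv g))
      \<and> card (generate G (A k <#> set_inv (A k))) = card (generate G (set_inv (A k) <#> A k))
      \<and> (\<forall>g\<in>A k. generate G (set_inv (A k) <#> A k) = generate G (inv g <# A k))"
    by (rule part_gen'[OF assms(2) assms(4)[OF i1(2)] assms(5)[OF i1(2)]])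
       (rule dvd_right[OF assms(4) assms(6) assms(3)])
  have M: "card (A i) dvd card (normal_closure G (set_inv (A i) <#> A i))
      \<and> (\<forall>g\<in>A i. normal_closure G (set_inv (A i) <#> A i) = normal_closure G (inv g <# A i))
      \<and> normal_closure G (set_inv (A i) <#> A i) = normal_closure G (A i <#> set_inv (A i))
      \<and> (\<forall>g\<in>A i. normal_closure G (set_inv (A i) <#> A i) = normal_closure G (A i #> inv g))"
    if "1 < i \<and> i < k" for i
  proof -
    have ii: "i \<in> {1..k}" using that by auto
    show ?thesis
      by (rule part_nc[OF assms(4)[OF ii] assms(5)[OF ii]])
         (rule dvd_mid[OF assms(4) assms(6) ii])
  qed
  show ?thesis using L R M by blast
qed

end
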